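(* Let $M$ be a dihedral axial decomposition algebra of Majorana type $(\eta,\eta)$ over a field $\mathbb{F}$ with $\operatorname{char}\mathbb{F}\neq2$, where $\eta\in\mathbb{F}\setminus\{0,1,\tfrac12\}$, with generating axes $(a_i)_{i\in\mathbb{Z}}$. Let $x,y\in M$ satisfy (i) $f_2(x)=-\tau_0(x)$, $f_3(x)=x$ and $x+f_1(x)+f_2(x)=0$; (ii) $f_1(y)=-y$ and $\tau_0(y)=y$. Suppose there exist $\alpha_0,\dots,\alpha_k\in\mathbb{F}$ with $x+y+\sum_{i=0}^k\alpha_i(a_{i+1}-a_{-i})=0$. Then: (1) $\alpha_k(a_{k+2}-a_{-k-2})+\sum_{i=1}^{k+1}(\alpha_{i+1}+2\alpha_i+2\alpha_{i-1}+\alpha_{i-2})(a_i-a_{-i})=0$, where $\alpha_{k+1}=\alpha_{k+2}=0$ and $\alpha_{-1}=-\alpha_0$. Moreover, if $\alpha_k\neq0$, then $\operatorname{adim}\le 2k+4$, and if $\operatorname{adim}=2k+4$, then $M$ satisfies an odd relation. (2) If $x=0$, then $\alpha_k(a_{k+1}-a_{-k-1})+\sum_{i=1}^k(\alpha_i+\alpha_{i-1})(a_i-a_{-i})=0$. Moreover, if $\alpha_k\neq0$, then $\operatorname{adim}\le 2k+2$, and if $\operatorname{adim}=2k+2$, then $M$ satisfies an odd relation.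
   Context: $M$ is a commutative nonassociative $\mathbb{F}$-algebra. With $\Phi(0)=0,\Phi(1)=1,\Phi(2)=\Phi(3)=\eta$, an axis $a\in M$ is an element together with a decomposition $M=\bigoplus_{i=0}^3M^i(a)$ such that $xa=\Phi(i)x$ for $x\in M^i(a)$, $M^1(a)=\mathbb{F}a$, and $M^0(a)M^i(a)\subset M^i(a)$ for all $i$, $M^2(a)M^2(a)\subset M^0(a)\oplus M^1(a)$, $M^2(a)M^3(a)\subset M^3(a)$, $M^3(a)M^3(a)\subset M^0(a)\oplus M^1(a)\oplus M^2(a)$. The Miyamoto involution $\tau(a)$ is the automorphism acting as $1$ on $M^0(a)\oplus M^1(a)\oplus M^2(a)$ and $-1$ on $M^3(a)$. $M$ is dihedral (of Majorana type $(\eta,\eta)$) with axes $(a_i)_{i\in\mathbb{Z}}$ if: $M$ is generated by the $a_i$; $a_i\mapsto a_{i+1}$ extends to an automorphism of $M$; and $\tau(a_j)(a_i)=a_{2j-i}$ for all $i,j$. Notation: $f_i$ is the automorphism with $f_i(a_j)=a_{i+j}$ for all $j$; $\tau_0=\tau(a_0)$. The axial dimension $\operatorname{adim}$ is $\dim_{\mathbb{F}}\operatorname{Span}\{a_i: i\in\mathbb{Z}\}$. $M$ satisfies an odd relation if either $\operatorname{adim}=2m$ and there are $\beta_1,\dots,\beta_m\in\mathbb{F}$ with $\beta_m\neq0$ and $\sum_{i=1}^m\beta_i(a_i-a_{-i})=0$, or $\operatorname{adim}=2m+1$ and there are $\beta_0,\dots,\beta_m\in\mathbb{F}$ with $\beta_m\neq0$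 and $\sum_{i=0}^m\beta_i(a_{i+1}-a_{-i})=0$. *)

theory Defs
  imports Complex_Main "HOL-Library.Extended_Nat"
begin

definition comm_algebra :: "('a::field \<Rightarrow> 'm::ab_group_add \<Rightarrow> 'm) \<Rightarrow> ('m \<Rightarrow> 'm \<Rightarrow> 'm) \<Rightarrow> bool" where
  "comm_algebra sc mul \<longleftrightarrow> vector_space sc \<and>
     (\<forall>x y z. mul (x + y) z = mul x z + mul y z) \<and>
     (\<forall>c x y. mul (sc c x) y = sc c (mul x y)) \<and>
     (\<forall>x y. mul x y = mul y x)"

definition Phi :: "'a::field \<Rightarrow> nat \<Rightarrow> 'a" where
  "Phi eta i = (if i = 0 then 0 else if i = 1 then 1 else eta)"

definition setprod :: "('m \<Rightarrow> 'm \<Rightarrow> 'm) \<Rightarrow> 'm set \<Rightarrow> 'm set \<Rightarrow> 'm set" where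
  "setprod mul A B = {mul x y | x y. x \<in> A \<and> y \<in> B}"

definition setsum2 :: "'m::ab_group_add set \<Rightarrow> 'm set \<Rightarrow> 'm set" where
  "setsum2 A B = {x + y | x y. x \<in> A \<and> y \<in> B}"

definition is_axis :: "('a::field \<Rightarrow> 'm::ab_group_add \<Rightarrow> 'm) \<Rightarrow> ('m \<Rightarrow> 'm \<Rightarrow> 'm) \<Rightarrow> 'a
     \<Rightarrow> 'm \<Rightarrow> (nat \<Rightarrow> 'm set) \<Rightarrow> bool" where
  "is_axis sc mul eta a D \<longleftrightarrow>
     (\<forall>i\<le>3. module.subspace sc (D i)) \<and>
     (\<forall>x. \<exists>!v::nat \<Rightarrow> 'm. v 0 \<in> D 0 \<and> v 1 \<in> D 1 \<and> v 2 \<in> D 2 \<and> v 3 \<in> D 3 \<and>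
              (\<forall>j>3. v j = 0) \<and> x = v 0 + v 1 + v 2 + v 3) \<and>
     (\<forall>i\<le>3. \<forall>x\<in>D i. mul x a = sc (Phi eta i) x) \<and>
     D 1 = {sc c a | c. True} \<and>
     (\<forall>i\<le>3. setprod mul (D 0) (D i) \<subseteq> D i) \<and>
     setprod mul (D 2) (D 2) \<subseteq> setsum2 (D 0) (D 1) \<and>
     setprod mul (D 2) (D 3) \<subseteq> D 3 \<and>
     setprod mul (D 3) (D 3) \<subseteq> setsum2 (setsum2 (D 0) (D 1)) (D 2)"

definition miyamoto :: "('m::ab_group_add) set \<Rightarrow> 'm set \<Rightarrow> 'm set \<Rightarrow> 'm set \<Rightarrow> 'm \<Rightarrow> 'm" where
  "miyamoto D0 D1 D2 D3 x = (THE y. \<exists>x0 x1 x2 x3. x0 \<in> D0 \<and> x1 \<in> D1 \<and> x2 \<in> D2 \<and> x3 \<in> D3 \<and>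
        x = x0 + x1 + x2 + x3 \<and> y = x0 + x1 + x2 - x3)"

definition tau :: "(nat \<Rightarrow> 'm::ab_group_add set) \<Rightarrow> 'm \<Rightarrow> 'm" where
  "tau D = miyamoto (D 0) (D 1) (D 2) (D 3)"

definition is_aut :: "('a::field \<Rightarrow> 'm::ab_group_add \<Rightarrow> 'm) \<Rightarrow> ('m \<Rightarrow> 'm \<Rightarrow> 'm) \<Rightarrow> ('m \<Rightarrow> 'm) \<Rightarrow> bool" where
  "is_aut sc mul f \<longleftrightarrow> bij f \<and> (\<forall>x y. f (x + y) = f x + f y) \<and> (\<forall>c x. f (sc c x) = sc c (f x)) \<and>
     (\<forall>x y. f (mul x y) = mul (f x) (f y))"

inductive_set gen_subalg :: "('a::field \<Rightarrow> 'm::ab_group_add \<Rightarrow> 'm) \<Rightarrow> ('m \<Rightarrow> 'm \<Rightarrow> 'm) \<Rightarrow> 'm set \<Rightarrow> 'm set"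
  for sc mul S where
  gen_base: "x \<in> S \<Longrightarrow> x \<in> gen_subalg sc mul S"
| gen_add: "x \<in> gen_subalg sc mul S \<Longrightarrow> y \<in> gen_subalg sc mul S \<Longrightarrow> x + y \<in> gen_subalg sc mul S"
| gen_scale: "x \<in> gen_subalg sc mul S \<Longrightarrow> sc c x \<in> gen_subalg sc mul S"
| gen_mul: "x \<in> gen_subalg sc mul S \<Longrightarrow> y \<in> gen_subalg sc mul S \<Longrightarrow> mul x y \<in> gen_subalg sc mul S"

definition dihedral :: "('a::field \<Rightarrow> 'm::ab_group_add \<Rightarrow> 'm) \<Rightarrow> ('m \<Rightarrow> 'm \<Rightarrow> 'm) \<Rightarrow> 'a
     \<Rightarrow> (int \<Rightarrow> 'm) \<Rightarrow> (int \<Rightarrow> nat \<Rightarrow> 'm set) \<Rightarrow> bool" where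
  "dihedral sc mul eta a D \<longleftrightarrow>
     comm_algebra sc mul \<and>
     (\<forall>i. is_axis sc mul eta (a i) (D i)) \<and>
     gen_subalg sc mul (range a) = UNIV \<and>
     (\<exists>f. is_aut sc mul f \<and> (\<forall>i. f (a i) = a (i + 1))) \<and>
     (\<forall>i j. tau (D j) (a i) = a (2 * j - i))"

definition fsh :: "('a::field \<Rightarrow> 'm::ab_group_add \<Rightarrow> 'm) \<Rightarrow> ('m \<Rightarrow> 'm \<Rightarrow> 'm) \<Rightarrow> (int \<Rightarrow> 'm) \<Rightarrow> int \<Rightarrow> 'm \<Rightarrow> 'm" where
  "fsh sc mul a i = (THE f. is_aut sc mul f \<and> (\<forall>j. f (a j) = a (i + j)))"

definition adim :: "('a::field \<Rightarrow> 'm::ab_group_add \<Rightarrow> 'm) \<Rightarrow> (int \<Rightarrow> 'm) \<Rightarrow> enat" where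
  "adim sc a = (if \<exists>B. finite B \<and> module.span sc B = module.span sc (range a)
                then enat (vector_space.dim sc (range a)) else \<infinity>)"

definition odd_relation :: "('a::field \<Rightarrow> 'm::ab_group_add \<Rightarrow> 'm) \<Rightarrow> (int \<Rightarrow> 'm) \<Rightarrow> bool" where
  "odd_relation sc a \<longleftrightarrow>
     (\<exists>m::nat. m \<ge> 1 \<and> adim sc a = enat (2 * m) \<and>
        (\<exists>\<beta>::nat \<Rightarrow> 'a. \<beta> m \<noteq> 0 \<and> (\<Sum>i\<in>{1..m}. sc (\<beta> i) (a (int i) - a (- int i))) = 0)) \<or>
     (\<exists>m::nat. adim sc a = enat (2 * m + 1) \<and>
        (\<exists>\<beta>::nat \<Rightarrow> 'a. \<beta> m \<noteq> 0 \<and> (\<Sum>i\<in>{0..m}. sc (\<beta> i) (a (int i + 1) - a (- int i))) = 0))"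

definition alpha_ext :: "(nat \<Rightarrow> 'a::field) \<Rightarrow> nat \<Rightarrow> int \<Rightarrow> 'a" where
  "alpha_ext \<alpha> k j = (if j = -1 then - \<alpha> 0 else if 0 \<le> j \<and> j \<le> int k then \<alpha> (nat j) else 0)"

end

theory Submission
  imports Defs
begin

definition lin :: "('a::field \<Rightarrow> 'm::ab_group_add \<Rightarrow> 'm) \<Rightarrow> ('m \<Rightarrow> 'm) \<Rightarrow> bool" where
  "lin sc h \<longleftrightarrow> (\<forall>x y. h (x + y) = h x + h y) \<and> (\<forall>c x. h (sc c x) = sc c (h x))"

lemma lin_add: "lin sc h \<Longrightarrow> h (x + y) = h x + h y" by (simp add: lin_def)
lemma lin_scale: "lin sc h \<Longrightarrow> h (sc c x) = sc c (h x)" by (simp add: lin_def)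
lemma lin_0: "lin sc h \<Longrightarrow> h 0 = 0"
  using lin_add[of sc h 0 0] by simp
lemma lin_neg: "lin sc h \<Longrightarrow> h (- x) = - h x"
proof -
  assume l: "lin sc h"
  have "h x + h (- x) = 0" using lin_add[OF l, of x "-x"] lin_0[OF l] by simp
  then show ?thesis by (metis add.inverse_unique)
qed
lemma lin_diff: "lin sc h \<Longrightarrow> h (x - y) = h x - h y"
  using lin_add[of sc h x "-y"] lin_neg[of sc h y] by simp
lemma lin_sum: "lin sc h \<Longrightarrow> h (sum g A) = (\<Sum>i\<in>A. h (g i))"
proof (cases "finite A")
  case True
  assume l: "lin sc h"
  from True show ?thesis by (induct A rule: finite_induct) (simp_all add: lin_0[OF l] lin_add[OF l])
next
  case False
  assume l: "lin sc h"
  with False show ?thesis by (simp add: lin_0[OF l])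
qed
lemma lin_comp: "lin sc h \<Longrightarrow> lin sc g \<Longrightarrow> lin sc (\<lambda>x. h (g x))"
  by (simp add: lin_def)
lemma lin_id: "lin sc (\<lambda>x. x)" by (simp add: lin_def)

definition Lc :: "('a::field \<Rightarrow> 'm::ab_group_add \<Rightarrow> 'm) \<Rightarrow> (int \<Rightarrow> 'm) \<Rightarrow> nat \<Rightarrow> (int \<Rightarrow> 'a) \<Rightarrow> 'm" where
  "Lc sc a N c = (\<Sum>m\<in>{- int N..int N}. sc (c m) (a m))"

context vector_space
begin

lemma Lc_add: "Lc scale a N c + Lc scale a N d = Lc scale a N (\<lambda>m. c m + d m)"
  unfolding Lc_def by (simp add: sum.distrib[symmetric] scale_left_distrib)

lemma Lc_diff: "Lc scale a N c - Lc scale a N d = Lc scale a N (\<lambda>m. c m - d m)"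
  unfolding Lc_def by (simp add: sum_subtractf[symmetric] scale_left_diff_distrib)

lemma Lc_cong: "(\<And>m. - int N \<le> m \<Longrightarrow> m \<le> int N \<Longrightarrow> c m = d m) \<Longrightarrow> Lc scale a N c = Lc scale a N d"
  unfolding Lc_def by (intro sum.cong) auto

lemma Lc_single: assumes "- int N \<le> p" "p \<le> int N"
  shows "scale r (a p) = Lc scale a N (\<lambda>m. if m = p then r else 0)"
proof -
  have "Lc scale a N (\<lambda>m. if m = p then r else 0) = (\<Sum>m\<in>{- int N..int N}. if m = p then scale r (a m) else 0)"
    unfolding Lc_def by (intro sum.cong) auto
  also have "\<dots> = scale r (a p)" using assms by (simp add: sum.delta)
  finally show ?thesis by simp
qed

lemma Lc_single2: assumes "- int N \<le> p" "p \<le> int N" "- int N \<le> q" "q \<le> int N"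
  shows "scale r (a p - a q) = Lc scale a N (\<lambda>m. (if m = p then r else 0) - (if m = q then r else 0))"
  by (simp add: scale_right_diff_distrib Lc_single[OF assms(1,2)] Lc_single[OF assms(3,4)] Lc_diff)

lemma conv_plus: assumes "- int N \<le> lo + s" "hi + s \<le> int N"
  shows "(\<Sum>i\<in>{lo..hi}. scale (g i) (a (i + s))) =
     Lc scale a N (\<lambda>m. if lo \<le> m - s \<and> m - s \<le> hi then g (m - s) else 0)"
proof -
  have "Lc scale a N (\<lambda>m. if lo \<le> m - s \<and> m - s \<le> hi then g (m - s) else 0)
      = (\<Sum>m\<in>{- int N..int N}. if lo \<le> m - s \<and> m - s \<le> hi then scale (g (m - s)) (a m) else 0)"
    unfolding Lc_def by (intro sum.cong) auto
  also have "\<dots> = (\<Sum>m\<in>{m \<in> {- int N..int N}. lo \<le> m - s \<and> m - s \<le> hi}. scale (g (m - s)) (a m))"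
    by (simp add: sum.inter_filter[symmetric])
  also have "{m \<in> {- int N..int N}. lo \<le> m - s \<and> m - s \<le> hi} = {lo + s..hi + s}"
    using assms by auto
  also have "(\<Sum>m\<in>{lo + s..hi + s}. scale (g (m - s)) (a m)) = (\<Sum>i\<in>{lo..hi}. scale (g i) (a (i + s)))"
    by (rule sum.reindex_bij_witness[of _ "\<lambda>i. i + s" "\<lambda>m. m - s"]) auto
  finally show ?thesis by simp
qed

lemma conv_minus: assumes "- int N \<le> t - hi" "t - lo \<le> int N"
  shows "(\<Sum>i\<in>{lo..hi}. scale (g i) (a (t - i))) =
     Lc scale a N (\<lambda>m. if lo \<le> t - m \<and> t - m \<le> hi then g (t - m) else 0)"
proof -
  have "Lc scale a N (\<lambda>m. if lo \<le> t - m \<and> t - m \<le> hi then g (t - m) else 0)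
      = (\<Sum>m\<in>{- int N..int N}. if lo \<le> t - m \<and> t - m \<le> hi then scale (g (t - m)) (a m) else 0)"
    unfolding Lc_def by (intro sum.cong) auto
  also have "\<dots> = (\<Sum>m\<in>{m \<in> {- int N..int N}. lo \<le> t - m \<and> t - m \<le> hi}. scale (g (t - m)) (a m))"
    by (simp add: sum.inter_filter[symmetric])
  also have "{m \<in> {- int N..int N}. lo \<le> t - m \<and> t - m \<le> hi} = {t - hi..t - lo}"
    using assms by auto
  also have "(\<Sum>m\<in>{t - hi..t - lo}. scale (g (t - m)) (a m)) = (\<Sum>i\<in>{lo..hi}. scale (g i) (a (t - i)))"
    by (rule sum.reindex_bij_witness[of _ "\<lambda>i. t - i" "\<lambda>m. t - m"]) auto
  finally show ?thesis by simp
qed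

lemma conv_int: assumes "- int N \<le> lo + s" "hi + s \<le> int N" "- int N \<le> t - hi" "t - lo \<le> int N"
  shows "(\<Sum>i\<in>{lo..hi}. scale (g i) (a (i + s) - a (t - i))) =
     Lc scale a N (\<lambda>m. (if lo \<le> m - s \<and> m - s \<le> hi then g (m - s) else 0)
                    - (if lo \<le> t - m \<and> t - m \<le> hi then g (t - m) else 0))"
  by (simp add: scale_right_diff_distrib sum_subtractf conv_plus[OF assms(1,2)]
        conv_minus[OF assms(3,4)] Lc_diff)

lemma conv_nat: assumes "- int N \<le> int lo + s" "int hi + s \<le> int N" "- int N \<le> t - int hi" "t - int lo \<le> int N"
  shows "(\<Sum>i\<in>{lo..hi}. scale (g i) (a (int i + s) - a (t - int i))) =
     Lc scale a N (\<lambda>m. (if int lo \<le> m - s \<and> m - s \<le> int hi then g (nat (m - s)) else 0)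
                    - (if int lo \<le> t - m \<and> t - m \<le> int hi then g (nat (t - m)) else 0))"
proof -
  have "(\<Sum>i\<in>{lo..hi}. scale (g i) (a (int i + s) - a (t - int i)))
      = (\<Sum>j\<in>{int lo..int hi}. scale (g (nat j)) (a (j + s) - a (t - j)))"
    by (simp add: image_int_atLeastAtMost[symmetric] sum.reindex)
  also have "\<dots> = Lc scale a N (\<lambda>m. (if int lo \<le> m - s \<and> m - s \<le> int hi then g (nat (m - s)) else 0)
                    - (if int lo \<le> t - m \<and> t - m \<le> int hi then g (nat (t - m)) else 0))"
    by (rule conv_int[OF assms])
  finally show ?thesis .
qed

end

lemma lin_o: "lin sc h \<Longrightarrow> lin sc g \<Longrightarrow> lin sc (h \<circ> g)"
  by (simp add: lin_def)

lemma lin_idf: "lin sc id" by (simp add: lin_def)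

lemma lin_add3: "lin sc h \<Longrightarrow> u + v + w = 0 \<Longrightarrow> h u + h v + h w = 0"
  by (metis lin_add lin_0)

lemma lin_shift_sum: "lin sc h \<Longrightarrow> (\<forall>j. h (a j) = a (j + s)) \<Longrightarrow>
   h (\<Sum>i\<in>I. sc (g i) (a (p i) - a (q i))) = (\<Sum>i\<in>I. sc (g i) (a (p i + s) - a (q i + s)))"
  by (simp add: lin_sum lin_scale lin_diff)

lemma lin_shift_one: "lin sc h \<Longrightarrow> (\<forall>j. h (a j) = a (j + s)) \<Longrightarrow>
   h (sc r (a p - a q)) = sc r (a (p + s) - a (q + s))"
  by (simp add: lin_scale lin_diff)

lemma shifts:
  fixes a :: "int \<Rightarrow> 'm::ab_group_add" and sc :: "'a::field \<Rightarrow> 'm \<Rightarrow> 'm"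
  assumes lf: "lin sc f" and bf: "bij f" and fa: "\<And>i. f (a i) = a (i + 1)"
  shows "\<exists>h. lin sc h \<and> (\<forall>j. h (a j) = a (j + t))"
proof -
  have pos: "lin sc (f ^^ n) \<and> (\<forall>j. (f ^^ n) (a j) = a (j + int n))" for n
  proof (induct n)
    case 0 then show ?case by (simp add: lin_idf lin_id)
  next
    case (Suc n) then show ?case by (simp add: lin_comp lf fa ac_simps)
  qed
  define g where "g = inv f"
  have gf: "\<And>x. g (f x) = x" by (simp add: g_def bij_is_inj[OF bf] inv_f_f)
  have fg: "\<And>x. f (g x) = x" using bf by (simp add: g_def bij_is_surj surj_f_inv_f)
  have lg: "lin sc g"
    unfolding lin_def
  proof (intro conjI allI)
    fix x y
    have "g (x + y) = g (f (g x) + f (g y))" by (simp add: fg)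
    also have "\<dots> = g (f (g x + g y))" by (simp add: lin_add[OF lf])
    also have "\<dots> = g x + g y" by (simp add: gf)
    finally show "g (x + y) = g x + g y" .
  next
    fix c x
    have "g (sc c x) = g (sc c (f (g x)))" by (simp add: fg)
    also have "\<dots> = g (f (sc c (g x)))" by (simp add: lin_scale[OF lf])
    also have "\<dots> = sc c (g x)" by (simp add: gf)
    finally show "g (sc c x) = sc c (g x)" .
  qed
  have ga: "g (a j) = a (j - 1)" for j
  proof -
    have "a j = f (a (j - 1))" by (simp add: fa)
    then show ?thesis by (simp add: gf)
  qed
  have neg: "lin sc (g ^^ n) \<and> (\<forall>j. (g ^^ n) (a j) = a (j - int n))" for n
  proof (induct n)
    case 0 then show ?case by (simp add: lin_idf lin_id)
  next
    case (Suc n) then show ?case by (simp add: lin_comp lg ga algebra_simps)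
  qed
  show ?thesis
  proof (cases "t \<ge> 0")
    case True
    then show ?thesis using pos[of "nat t"] by auto
  next
    case False
    then show ?thesis using neg[of "nat (- t)"] by auto
  qed
qed

lemma aut_comp: "is_aut sc mul g \<Longrightarrow> is_aut sc mul h \<Longrightarrow> is_aut sc mul (\<lambda>x. g (h x))"
proof -
  assume g: "is_aut sc mul g" and h: "is_aut sc mul h"
  have "bij (g \<circ> h)" using g h by (intro bij_comp) (auto simp: is_aut_def)
  then show ?thesis using g h by (simp add: is_aut_def comp_def)
qed

lemma aut_unique:
  assumes genU: "gen_subalg sc mul (range a) = UNIV"
    and g: "is_aut sc mul g" and h: "is_aut sc mul h" and eq: "\<forall>j. g (a j) = h (a j)"
  shows "g = h"
proof -
  have "z \<in> gen_subalg sc mul (range a) \<Longrightarrow> g z = h z" for z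
  proof (induct rule: gen_subalg.induct)
    case (gen_base x) then show ?case using eq by auto
  next
    case (gen_add x y) then show ?case using g h by (simp add: is_aut_def)
  next
    case (gen_scale x c) then show ?case using g h by (simp add: is_aut_def)
  next
    case (gen_mul x y) then show ?case using g h by (simp add: is_aut_def)
  qed
  then show ?thesis using genU by auto
qed

lemma fsh_eq:
  assumes genU: "gen_subalg sc mul (range a) = UNIV"
    and g: "is_aut sc mul g" and ga: "\<forall>j. g (a j) = a (i + j)"
  shows "fsh sc mul a i = g"
  unfolding fsh_def
proof (rule the_equality)
  show "is_aut sc mul g \<and> (\<forall>j. g (a j) = a (i + j))" using g ga by simp
next
  fix h assume "is_aut sc mul h \<and> (\<forall>j. h (a j) = a (i + j))"
  then show "h = g" using aut_unique[OF genU, of h g] g ga by auto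
qed

context vector_space
begin

lemma adim_bound:
  fixes a :: "int \<Rightarrow> 'b" and \<beta> :: "nat \<Rightarrow> 'a" and n :: nat
  assumes sh: "\<And>t. \<exists>h. lin scale h \<and> (\<forall>j. h (a j) = a (j + t))"
    and n: "1 \<le> n" and bn: "\<beta> n \<noteq> 0"
    and rel: "(\<Sum>i\<in>{1..n}. scale (\<beta> i) (a (int i) - a (- int i))) = 0"
  shows "adim scale a \<le> enat (2 * n)"
proof -
  obtain n' where nn: "n = Suc n'" using n by (cases n) auto
  have step: "a (t + int n) \<in> span (a ` {t - int n..t + int n - 1}) \<and>
              a (t - int n) \<in> span (a ` {t - int n + 1..t + int n})" for t
  proof -
    obtain h where lh: "lin scale h" and ha: "\<forall>j. h (a j) = a (j + t)" using sh by blast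
    have "h (\<Sum>i\<in>{1..n}. scale (\<beta> i) (a (int i) - a (- int i))) = 0" using rel lin_0[OF lh] by simp
    hence r: "(\<Sum>i\<in>{1..n}. scale (\<beta> i) (a (int i + t) - a (- int i + t))) = 0"
      by (simp add: lin_shift_sum[OF lh ha])
    define R where "R = (\<Sum>i\<in>{1..n'}. scale (\<beta> i) (a (int i + t) - a (- int i + t)))"
    have r2: "R + scale (\<beta> n) (a (t + int n) - a (t - int n)) = 0"
      using r by (simp add: R_def nn algebra_simps)
    have RS: "R \<in> span (a ` {t - int n'..t + int n'})"
      unfolding R_def by (intro span_sum span_scale span_diff span_base) auto
    have d: "a (t + int n) - a (t - int n) = scale (inverse (\<beta> n)) (- R)"
    proof -
      have "scale (\<beta> n) (a (t + int n) - a (t - int n)) = - R" using r2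
        by (metis add.commute add.inverse_unique)
      hence "scale (inverse (\<beta> n)) (scale (\<beta> n) (a (t + int n) - a (t - int n))) = scale (inverse (\<beta> n)) (- R)"
        by simp
      thus ?thesis using bn by simp
    qed
    have sub1: "span (a ` {t - int n'..t + int n'}) \<subseteq> span (a ` {t - int n..t + int n - 1})"
      by (intro span_mono image_mono) (auto simp: nn)
    have sub2: "span (a ` {t - int n'..t + int n'}) \<subseteq> span (a ` {t - int n + 1..t + int n})"
      by (intro span_mono image_mono) (auto simp: nn)
    have e1: "a (t + int n) = a (t - int n) + scale (inverse (\<beta> n)) (- R)" using d
      by (simp add: diff_eq_eq)
    have e2: "a (t - int n) = a (t + int n) - scale (inverse (\<beta> n)) (- R)" using d
      by (simp add: eq_diff_eq diff_eq_eq add.commute)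
    have m1: "a (t - int n) \<in> span (a ` {t - int n..t + int n - 1})"
      by (rule span_base) (auto simp: nn)
    have m2: "a (t + int n) \<in> span (a ` {t - int n + 1..t + int n})"
      by (rule span_base) (auto simp: nn)
    show ?thesis
      using RS sub1 sub2 m1 m2
      by (subst e1, subst e2) (auto intro!: span_add span_diff span_scale span_neg)
  qed
  define W where "W = a ` {- int n..int n - 1}"
  have ind: "\<forall>j. - int n - int N \<le> j \<and> j \<le> int n - 1 + int N \<longrightarrow> a j \<in> span W" for N
  proof (induct N)
    case 0 then show ?case by (auto simp: W_def intro: span_base)
  next
    case (Suc N)
    have sub: "span (a ` {- int n - int N..int n - 1 + int N}) \<subseteq> span W"
      by (rule span_minimal) (use Suc in \<open>auto simp: subspace_span\<close>)
    show ?case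
    proof (intro allI impI)
      fix j assume j: "- int n - int (Suc N) \<le> j \<and> j \<le> int n - 1 + int (Suc N)"
      consider "- int n - int N \<le> j \<and> j \<le> int n - 1 + int N" | "j = int N + int n" | "j = - int N - 1 - int n"
        using j by linarith
      then show "a j \<in> span W"
      proof cases
        case 1 with Suc show ?thesis by blast
      next
        case 2
        have "a (int N + int n) \<in> span (a ` {int N - int n..int N + int n - 1})" using step[of "int N"] by simp
        moreover have "span (a ` {int N - int n..int N + int n - 1}) \<subseteq> span (a ` {- int n - int N..int n - 1 + int N})"
          by (intro span_mono image_mono) auto
        ultimately show ?thesis using sub 2 by auto
      next
        case 3
        have "a (- int N - 1 - int n) \<in> span (a ` {- int N - 1 - int n + 1..- int N - 1 + int n})"
          using step[of "- int N - 1"] by simp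
        moreover have "span (a ` {- int N - 1 - int n + 1..- int N - 1 + int n}) \<subseteq> span (a ` {- int n - int N..int n - 1 + int N})"
          by (intro span_mono image_mono) auto
        ultimately show ?thesis using sub 3 by auto
      qed
    qed
  qed
  have ra: "range a \<subseteq> span W"
  proof
    fix z assume "z \<in> range a"
    then obtain j where z: "z = a j" by auto
    have "- int n - int (nat \<bar>j\<bar>) \<le> j \<and> j \<le> int n - 1 + int (nat \<bar>j\<bar>)" using n by auto
    then show "z \<in> span W" using ind z by blast
  qed
  have fW: "finite W" by (simp add: W_def)
  have speq: "span W = span (range a)" unfolding span_eq using ra by (auto simp: W_def intro: span_base)
  have "dim (range a) \<le> card W" by (rule dim_le_card[OF ra fW])
  also have "card W \<le> card {- int n..int n - 1}" unfolding W_def by (rule card_image_le) simp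
  also have "\<dots> = 2 * n" by simp
  finally have "dim (range a) \<le> 2 * n" .
  then show ?thesis unfolding adim_def using fW speq by auto
qed

end

lemma odd_rel_of:
  assumes "1 \<le> n" "\<beta> n \<noteq> 0" "(\<Sum>i\<in>{1..n}. sc (\<beta> i) (a (int i) - a (- int i))) = 0"
    "adim sc a = enat (2 * n)"
  shows "odd_relation sc a"
  unfolding odd_relation_def using assms by blast


lemma pw1:
  fixes \<alpha> :: "nat \<Rightarrow> 'a::field" and A E :: "int \<Rightarrow> 'a"
  assumes A: "\<And>j. A j = (if 0 \<le> j \<and> j \<le> int k then \<alpha> (nat j) else 0)"
  and E: "\<And>j. E j = alpha_ext \<alpha> k j"
  shows "((if m = int k + 4 then \<alpha> k else 0) - (if m = - int k then \<alpha> k else 0))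
     + ((if 1 \<le> m - 2 \<and> m - 2 \<le> int k + 1 then E (m - 2 + 1) + 2 * E (m - 2) + 2 * E (m - 2 - 1) + E (m - 2 - 2) else 0)
       - (if 1 \<le> 2 - m \<and> 2 - m \<le> int k + 1 then E (2 - m + 1) + 2 * E (2 - m) + 2 * E (2 - m - 1) + E (2 - m - 2) else 0))
    = (A (m - 1) - A (0 - m)) + (A (m - 2) - A (1 - m)) + (A (m - 2) - A (1 - m))
      + (A (m - 3) - A (2 - m)) + (A (m - 3) - A (2 - m)) + (A (m - 4) - A (3 - m))"
proof -
  have E': "\<And>j. E j = (if j = -1 then - A 0 else A j)"
    by (simp add: E A alpha_ext_def)
  have Az: "\<And>j. j < 0 \<Longrightarrow> A j = 0" "\<And>j. j > int k \<Longrightarrow> A j = 0" by (simp_all add: A)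
  have Ak: "A (int k) = \<alpha> k" by (simp add: A)
  have args: "m - 2 + 1 = m - 1" "m - 2 - 1 = m - 3" "m - 2 - 2 = m - 4" "2 - m + 1 = 3 - m"
     "2 - m - 1 = 1 - m" "2 - m - 2 = 0 - m" by simp_all
  consider "m \<ge> int k + 5" | "m = int k + 4" | "4 \<le> m \<and> m \<le> int k + 3" | "m = 3" | "m = 2" | "m = 1"
    | "1 - int k \<le> m \<and> m \<le> 0" | "m = - int k" | "m \<le> - int k - 1" by linarith
  then show ?thesis
  proof cases
    case 1
    then show ?thesis unfolding args by (simp add: Az)
  next
    case 2
    then show ?thesis unfolding args by (simp add: Az Ak)
  next
    case 3
    then show ?thesis unfolding args by (simp add: Az E' algebra_simps)
  next
    case 4
    then show ?thesis unfolding args by (simp add: Az E' algebra_simps)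
  next
    case 5
    then show ?thesis unfolding args by (simp add: Az E' algebra_simps)
  next
    case 6
    then show ?thesis unfolding args by (simp add: Az E' algebra_simps)
  next
    case 7
    then show ?thesis unfolding args by (simp add: Az E' algebra_simps)
  next
    case 8
    then show ?thesis unfolding args by (simp add: Az E' Ak algebra_simps)
  next
    case 9
    then show ?thesis unfolding args by (simp add: Az)
  qed
qed

lemma pw2:
  fixes \<alpha> :: "nat \<Rightarrow> 'a::field" and A :: "int \<Rightarrow> 'a"
  assumes A: "\<And>j. A j = (if 0 \<le> j \<and> j \<le> int k then \<alpha> (nat j) else 0)"
  shows "((if m = int k + 2 then \<alpha> k else 0) - (if m = - int k then \<alpha> k else 0))
     + ((if 1 \<le> m - 1 \<and> m - 1 \<le> int k then \<alpha> (nat (m - 1)) + \<alpha> (nat (m - 1) - 1) else 0)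
       - (if 1 \<le> 1 - m \<and> 1 - m \<le> int k then \<alpha> (nat (1 - m)) + \<alpha> (nat (1 - m) - 1) else 0))
    = (A (m - 1) - A (0 - m)) + (A (m - 2) - A (1 - m))"
proof -
  have Az: "\<And>j. j < 0 \<Longrightarrow> A j = 0" "\<And>j. j > int k \<Longrightarrow> A j = 0" by (simp_all add: A)
  have Ak: "A (int k) = \<alpha> k" by (simp add: A)
  consider "m \<ge> int k + 3" | "m = int k + 2" | "2 \<le> m \<and> m \<le> int k + 1" | "m = 1"
    | "1 - int k \<le> m \<and> m \<le> 0" | "m = - int k" | "m \<le> - int k - 1" by linarith
  then show ?thesis
  proof cases
    case 1
    then show ?thesis by (simp add: Az)
  next
    case 2
    then show ?thesis by (simp add: Az Ak)
  next
    case 3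
    have c: "(1 \<le> m - 1 \<and> m - 1 \<le> int k) = True" "(1 \<le> 1 - m \<and> 1 - m \<le> int k) = False"
      "(m = int k + 2) = False" "(m = - int k) = False" using 3 by auto
    have nn: "nat (m - 1) - 1 = nat (m - 2)" using 3 by arith
    have v: "\<alpha> (nat (m - 1)) = A (m - 1)" "\<alpha> (nat (m - 1) - 1) = A (m - 2)" using 3
      by (simp_all only: nn A) auto
    have z: "A (0 - m) = 0" "A (1 - m) = 0" using 3 by (auto intro: Az)
    show ?thesis
      apply (simp only: c v z if_True if_False)
      apply (simp add: algebra_simps)
      done
  next
    case 4
    then show ?thesis by (simp add: Az)
  next
    case 5
    have c: "(1 \<le> m - 1 \<and> m - 1 \<le> int k) = False" "(1 \<le> 1 - m \<and> 1 - m \<le> int k) = True"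
      "(m = int k + 2) = False" "(m = - int k) = False" using 5 by auto
    have nn: "nat (1 - m) - 1 = nat (0 - m)" using 5 by arith
    have v: "\<alpha> (nat (1 - m)) = A (1 - m)" "\<alpha> (nat (1 - m) - 1) = A (0 - m)" using 5
      by (simp_all only: nn A) auto
    have z: "A (m - 1) = 0" "A (m - 2) = 0" using 5 by (auto intro: Az)
    show ?thesis
      apply (simp only: c v z if_True if_False)
      apply (simp add: algebra_simps)
      done
  next
    case 6
    have c: "(1 \<le> m - 1 \<and> m - 1 \<le> int k) = False" "(1 \<le> 1 - m \<and> 1 - m \<le> int k) = False"
      "(m = int k + 2) = False" "(m = - int k) = True" using 6 by auto
    have v: "A (0 - m) = \<alpha> k" using 6 Ak by simp
    have z: "A (m - 1) = 0" "A (m - 2) = 0" "A (1 - m) = 0" using 6 by (auto intro: Az)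
    show ?thesis
      apply (simp only: c v z if_True if_False)
      done
  next
    case 7
    then show ?thesis by (simp add: Az)
  qed
qed

theorem lemma1:
  fixes sc :: "'a::field \<Rightarrow> 'm::ab_group_add \<Rightarrow> 'm"
    and mul :: "'m \<Rightarrow> 'm \<Rightarrow> 'm"
    and eta :: 'a
    and a :: "int \<Rightarrow> 'm"
    and D :: "int \<Rightarrow> nat \<Rightarrow> 'm set"
    and x y :: 'm
    and \<alpha> :: "nat \<Rightarrow> 'a"
    and k :: nat
  assumes char: "(2::'a) \<noteq> 0"
    and eta: "eta \<noteq> 0" "eta \<noteq> 1" "eta \<noteq> 1 / 2"
    and dih: "dihedral sc mul eta a D"
    and x1: "fsh sc mul a 2 x = - tau (D 0) x"
    and x2: "fsh sc mul a 3 x = x"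
    and x3: "x + fsh sc mul a 1 x + fsh sc mul a 2 x = 0"
    and y1: "fsh sc mul a 1 y = - y"
    and y2: "tau (D 0) y = y"
    and rel: "x + y + (\<Sum>i\<in>{0..k}. sc (\<alpha> i) (a (int i + 1) - a (- int i))) = 0"
  shows "(sc (\<alpha> k) (a (int k + 2) - a (- int k - 2)) +
           (\<Sum>i\<in>{1..int k + 1}. sc (alpha_ext \<alpha> k (i + 1) + 2 * alpha_ext \<alpha> k i
                 + 2 * alpha_ext \<alpha> k (i - 1) + alpha_ext \<alpha> k (i - 2)) (a i - a (- i))) = 0 \<and>
         (\<alpha> k \<noteq> 0 \<longrightarrow> adim sc a \<le> enat (2 * k + 4) \<and>
             (adim sc a = enat (2 * k + 4) \<longrightarrow> odd_relation sc a)))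
       \<and> (x = 0 \<longrightarrow>
         sc (\<alpha> k) (a (int k + 1) - a (- int k - 1)) +
           (\<Sum>i\<in>{1..k}. sc (\<alpha> i + \<alpha> (i - 1)) (a (int i) - a (- int i))) = 0 \<and>
         (\<alpha> k \<noteq> 0 \<longrightarrow> adim sc a \<le> enat (2 * k + 2) \<and>
             (adim sc a = enat (2 * k + 2) \<longrightarrow> odd_relation sc a)))"
proof -
  have ca: "comm_algebra sc mul" using dih unfolding dihedral_def by blast
  have genU: "gen_subalg sc mul (range a) = UNIV" using dih unfolding dihedral_def by blast
  have exf: "\<exists>f. is_aut sc mul f \<and> (\<forall>i. f (a i) = a (i + 1))" using dih unfolding dihedral_def by blast
  have vs: "vector_space sc" using ca by (simp add: comm_algebra_def)
  interpret vs: vector_space sc by (rule vs)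
  obtain f where faut: "is_aut sc mul f" and fa: "\<And>i. f (a i) = a (i + 1)" using exf by auto
  have linf: "lin sc f" using faut by (simp add: is_aut_def lin_def)
  have bijf: "bij f" using faut by (simp add: is_aut_def)
  have injf: "inj f" using bijf by (rule bij_is_inj)
  have fsh1: "fsh sc mul a 1 = f" by (rule fsh_eq[OF genU faut]) (simp add: fa add.commute)
  have fsh2: "fsh sc mul a 2 = (\<lambda>z. f (f z))"
    by (rule fsh_eq[OF genU aut_comp[OF faut faut]]) (simp add: fa algebra_simps)
  have sh: "\<And>t. \<exists>h. lin sc h \<and> (\<forall>j. h (a j) = a (j + t))" by (rule shifts[of sc f a, OF linf bijf fa])
  have lf2: "lin sc (\<lambda>z. f (f z))" by (rule lin_comp[OF linf linf])
  have lf3: "lin sc (\<lambda>z. f (f (f z)))" by (rule lin_comp[OF linf lf2])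
  have fa1: "\<forall>j. f (a j) = a (j + 1)" by (simp add: fa)
  have fa2: "\<forall>j. f (f (a j)) = a (j + 2)" by (simp add: fa algebra_simps)
  have fa3: "\<forall>j. f (f (f (a j))) = a (j + 3)" by (simp add: fa algebra_simps)
  have fa0: "\<forall>j. (\<lambda>z. z) (a j) = a (j + 0)" by simp
  define S where "S = (\<Sum>i\<in>{0..k}. sc (\<alpha> i) (a (int i + 1) - a (- int i)))"
  define A where "A j = (if 0 \<le> j \<and> j \<le> int k then \<alpha> (nat j) else 0)" for j
  define N where "N = k + 5"
  have rel': "x + y + S = 0" using rel by (simp add: S_def)
  have x3': "x + f x + f (f x) = 0" using x3 by (simp add: fsh1 fsh2)
  have y1': "f y = - y" using y1 by (simp add: fsh1)
  have hS: "h S = Lc sc a N (\<lambda>m. A (m - (1 + s0)) - A (s0 - m))"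
    if lh: "lin sc h" and ha: "\<forall>j. h (a j) = a (j + s0)" and s0: "0 \<le> s0" "s0 \<le> 3" for h s0
  proof -
    have "h S = (\<Sum>i\<in>{0..k}. sc (\<alpha> i) (a (int i + 1 + s0) - a (- int i + s0)))"
      unfolding S_def by (rule lin_shift_sum[OF lh ha])
    also have "\<dots> = (\<Sum>i\<in>{0..k}. sc (\<alpha> i) (a (int i + (1 + s0)) - a (s0 - int i)))"
      by (rule sum.cong) (simp_all add: algebra_simps)
    also have "\<dots> = Lc sc a N (\<lambda>m. (if int 0 \<le> m - (1 + s0) \<and> m - (1 + s0) \<le> int k then \<alpha> (nat (m - (1 + s0))) else 0)
                    - (if int 0 \<le> s0 - m \<and> s0 - m \<le> int k then \<alpha> (nat (s0 - m)) else 0))"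
      by (rule vs.conv_nat) (use s0 in \<open>simp_all add: N_def\<close>)
    also have "\<dots> = Lc sc a N (\<lambda>m. A (m - (1 + s0)) - A (s0 - m))"
      by (rule vs.Lc_cong) (simp add: A_def)
    finally show ?thesis .
  qed
  define cc where "cc i = alpha_ext \<alpha> k (i + 1) + 2 * alpha_ext \<alpha> k i
                 + 2 * alpha_ext \<alpha> k (i - 1) + alpha_ext \<alpha> k (i - 2)" for i
  have part1: "sc (\<alpha> k) (a (int k + 2) - a (- int k - 2)) +
           (\<Sum>i\<in>{1..int k + 1}. sc (alpha_ext \<alpha> k (i + 1) + 2 * alpha_ext \<alpha> k i
                 + 2 * alpha_ext \<alpha> k (i - 1) + alpha_ext \<alpha> k (i - 2)) (a i - a (- i))) = 0"
    (is "?C1 = 0")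
  proof -
    have r1: "f x + f y + f S = 0" by (rule lin_add3[OF linf rel'])
    have r2: "f (f x) + f (f y) + f (f S) = 0" by (rule lin_add3[OF linf r1])
    have r3: "f (f (f x)) + f (f (f y)) + f (f (f S)) = 0" by (rule lin_add3[OF linf r2])
    have x4: "f x + f (f x) + f (f (f x)) = 0" by (rule lin_add3[OF linf x3'])
    have y2': "f (f y) = y" by (simp add: y1' lin_neg[OF linf])
    have y3': "f (f (f y)) = - y" by (subst y2') (rule y1')
    have T0: "S + f S + f S + f (f S) + f (f S) + f (f (f S)) = 0"
    proof -
      have gen: "\<And>fy f2y f3y fx f2x f3x fS f2S f3S. fy = - y \<Longrightarrow> f2y = y \<Longrightarrow> f3y = - y \<Longrightarrow>
         S + fS + fS + f2S + f2S + f3S =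
         (x + y + S) + (fx + fy + fS) + (fx + fy + fS) + (f2x + f2y + f2S)
         + (f2x + f2y + f2S) + (f3x + f3y + f3S)
         - (x + fx + f2x) - (fx + f2x + f3x)"
        by (simp add: algebra_simps)
      have "S + f S + f S + f (f S) + f (f S) + f (f (f S)) =
         (x + y + S) + (f x + f y + f S) + (f x + f y + f S) + (f (f x) + f (f y) + f (f S))
         + (f (f x) + f (f y) + f (f S)) + (f (f (f x)) + f (f (f y)) + f (f (f S)))
         - (x + f x + f (f x)) - (f x + f (f x) + f (f (f x)))"
        using gen[OF y1' y2' y3'] .

      then show ?thesis by (simp only: rel' r1 r2 r3 x3' x4) simp
    qed
    have TL: "S + f S + f S + f (f S) + f (f S) + f (f (f S)) =
       Lc sc a N (\<lambda>m. (A (m - 1) - A (0 - m)) + (A (m - 2) - A (1 - m)) + (A (m - 2) - A (1 - m))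
          + (A (m - 3) - A (2 - m)) + (A (m - 3) - A (2 - m)) + (A (m - 4) - A (3 - m)))"
      using hS[OF lin_id fa0] hS[OF linf fa1] hS[OF lf2 fa2] hS[OF lf3 fa3]
      by (simp add: vs.Lc_add)
    have FC: "f (f ?C1) = sc (\<alpha> k) (a (int k + 2 + 2) - a (- int k - 2 + 2)) +
           (\<Sum>i\<in>{1..int k + 1}. sc (cc i) (a (i + 2) - a (- i + 2)))"
      unfolding cc_def by (simp add: lin_add[OF lf2] lin_shift_sum[OF lf2 fa2] lin_shift_one[OF lf2 fa2])
    have s1: "sc (\<alpha> k) (a (int k + 2 + 2) - a (- int k - 2 + 2)) =
       Lc sc a N (\<lambda>m. (if m = int k + 4 then \<alpha> k else 0) - (if m = - int k then \<alpha> k else 0))"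
    proof -
      have eq: "int k + 2 + 2 = int k + 4" "- int k - 2 + 2 = - int k" by simp_all
      show ?thesis unfolding eq by (rule vs.Lc_single2) (simp_all add: N_def)
    qed
    have s2: "(\<Sum>i\<in>{1..int k + 1}. sc (cc i) (a (i + 2) - a (- i + 2)))
        = (\<Sum>i\<in>{1..int k + 1}. sc (cc i) (a (i + 2) - a (2 - i)))"
      by (rule sum.cong) (simp_all add: algebra_simps)
    have s3: "(\<Sum>i\<in>{1..int k + 1}. sc (cc i) (a (i + 2) - a (2 - i))) =
       Lc sc a N (\<lambda>m. (if 1 \<le> m - 2 \<and> m - 2 \<le> int k + 1 then cc (m - 2) else 0)
                    - (if 1 \<le> 2 - m \<and> 2 - m \<le> int k + 1 then cc (2 - m) else 0))"
      by (rule vs.conv_int) (simp_all add: N_def)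
    have "f (f ?C1) = S + f S + f S + f (f S) + f (f S) + f (f (f S))"
      unfolding FC s1 s2 s3 vs.Lc_add TL
      by (rule vs.Lc_cong) (unfold cc_def, rule pw1[OF A_def refl])
    then have "f (f ?C1) = f (f 0)" using T0 by (simp add: lin_0[OF linf])
    then show ?thesis using injf by (auto dest: injD)
  qed
  have adim1: "\<alpha> k \<noteq> 0 \<longrightarrow> adim sc a \<le> enat (2 * k + 4) \<and>
             (adim sc a = enat (2 * k + 4) \<longrightarrow> odd_relation sc a)"
  proof
    assume ak: "\<alpha> k \<noteq> 0"
    define \<beta> where "\<beta> i = (if i = k + 2 then \<alpha> k else cc (int i))" for i
    have ins: "{1..k+2} = insert (k+2) {1..k+1}" by auto
    have "(\<Sum>i\<in>{1..k+2}. sc (\<beta> i) (a (int i) - a (- int i)))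
        = sc (\<alpha> k) (a (int k + 2) - a (- int k - 2)) + (\<Sum>i\<in>{1..k+1}. sc (\<beta> i) (a (int i) - a (- int i)))"
      unfolding ins by (simp add: \<beta>_def algebra_simps)
    also have "(\<Sum>i\<in>{1..k+1}. sc (\<beta> i) (a (int i) - a (- int i))) = (\<Sum>i\<in>{1..k+1}. sc (cc (int i)) (a (int i) - a (- int i)))"
      by (rule sum.cong) (simp_all add: \<beta>_def)
    also have "\<dots> = (\<Sum>i\<in>{1..int k + 1}. sc (cc i) (a i - a (- i)))"
    proof -
      have "{1..int k + 1} = int ` {1..k+1}" by (simp add: image_int_atLeastAtMost)
      then show ?thesis by (simp add: sum.reindex)
    qed
    finally have eqC: "(\<Sum>i\<in>{1..k+2}. sc (\<beta> i) (a (int i) - a (- int i))) =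
        sc (\<alpha> k) (a (int k + 2) - a (- int k - 2)) + (\<Sum>i\<in>{1..int k + 1}. sc (cc i) (a i - a (- i)))" .
    have rel1: "(\<Sum>i\<in>{1..k+2}. sc (\<beta> i) (a (int i) - a (- int i))) = 0"
      using eqC part1 unfolding cc_def by (rule trans)
    have bn: "\<beta> (k + 2) \<noteq> 0" using ak by (simp add: \<beta>_def)
    have e: "2 * (k + 2) = 2 * k + 4" by simp
    have b: "adim sc a \<le> enat (2 * (k + 2))" by (rule vs.adim_bound[OF sh _ bn rel1]) simp
    have o: "adim sc a = enat (2 * (k + 2)) \<Longrightarrow> odd_relation sc a"
      by (rule odd_rel_of[of "k + 2" \<beta> sc a]) (use bn rel1 in simp_all)
    show "adim sc a \<le> enat (2 * k + 4) \<and> (adim sc a = enat (2 * k + 4) \<longrightarrow> odd_relation sc a)"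
      using b o unfolding e by blast
  qed
  have part2: "x = 0 \<longrightarrow>
         sc (\<alpha> k) (a (int k + 1) - a (- int k - 1)) +
           (\<Sum>i\<in>{1..k}. sc (\<alpha> i + \<alpha> (i - 1)) (a (int i) - a (- int i))) = 0 \<and>
         (\<alpha> k \<noteq> 0 \<longrightarrow> adim sc a \<le> enat (2 * k + 2) \<and>
             (adim sc a = enat (2 * k + 2) \<longrightarrow> odd_relation sc a))"
  proof
    assume x0: "x = 0"
    let ?C2 = "sc (\<alpha> k) (a (int k + 1) - a (- int k - 1)) +
           (\<Sum>i\<in>{1..k}. sc (\<alpha> i + \<alpha> (i - 1)) (a (int i) - a (- int i)))"
    have yS: "y + S = 0" using rel' x0 by simp
    then have Sy: "S = - y" by (metis add.inverse_unique)
    have fS: "f S = y" unfolding Sy lin_neg[OF linf] y1' by simp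
    have T0: "S + f S = 0" unfolding fS by (simp add: Sy)
    have TL: "S + f S = Lc sc a N (\<lambda>m. (A (m - 1) - A (0 - m)) + (A (m - 2) - A (1 - m)))"
      using hS[OF lin_id fa0] hS[OF linf fa1] by (simp add: vs.Lc_add)
    have FC: "f ?C2 = sc (\<alpha> k) (a (int k + 1 + 1) - a (- int k - 1 + 1)) +
           (\<Sum>i\<in>{1..k}. sc (\<alpha> i + \<alpha> (i - 1)) (a (int i + 1) - a (- int i + 1)))"
      by (simp add: lin_add[OF linf] lin_shift_sum[OF linf fa1] lin_shift_one[OF linf fa1])
    have s1: "sc (\<alpha> k) (a (int k + 1 + 1) - a (- int k - 1 + 1)) =
       Lc sc a N (\<lambda>m. (if m = int k + 2 then \<alpha> k else 0) - (if m = - int k then \<alpha> k else 0))"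
    proof -
      have eq: "int k + 1 + 1 = int k + 2" "- int k - 1 + 1 = - int k" by simp_all
      show ?thesis unfolding eq by (rule vs.Lc_single2) (simp_all add: N_def)
    qed
    have s2: "(\<Sum>i\<in>{1..k}. sc (\<alpha> i + \<alpha> (i - 1)) (a (int i + 1) - a (- int i + 1)))
        = (\<Sum>i\<in>{1..k}. sc (\<alpha> i + \<alpha> (i - 1)) (a (int i + 1) - a (1 - int i)))"
      by (rule sum.cong) (simp_all add: algebra_simps)
    have s3: "(\<Sum>i\<in>{1..k}. sc (\<alpha> i + \<alpha> (i - 1)) (a (int i + 1) - a (1 - int i))) =
       Lc sc a N (\<lambda>m. (if 1 \<le> m - 1 \<and> m - 1 \<le> int k then \<alpha> (nat (m - 1)) + \<alpha> (nat (m - 1) - 1) else 0)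
                    - (if 1 \<le> 1 - m \<and> 1 - m \<le> int k then \<alpha> (nat (1 - m)) + \<alpha> (nat (1 - m) - 1) else 0))"
    proof -
      have "(\<Sum>i\<in>{1..k}. sc (\<alpha> i + \<alpha> (i - 1)) (a (int i + 1) - a (1 - int i))) =
       Lc sc a N (\<lambda>m. (if int 1 \<le> m - 1 \<and> m - 1 \<le> int k then \<alpha> (nat (m - 1)) + \<alpha> (nat (m - 1) - 1) else 0)
                    - (if int 1 \<le> 1 - m \<and> 1 - m \<le> int k then \<alpha> (nat (1 - m)) + \<alpha> (nat (1 - m) - 1) else 0))"
        by (rule vs.conv_nat) (simp_all add: N_def)
      then show ?thesis by simp
    qed
    have "f ?C2 = S + f S"
      unfolding FC s1 s2 s3 vs.Lc_add TL
      by (rule vs.Lc_cong) (rule pw2[OF A_def])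
    then have "f ?C2 = f 0" using T0 by (simp add: lin_0[OF linf])
    then have C2: "?C2 = 0" using injf by (auto dest: injD)
    have adim2: "\<alpha> k \<noteq> 0 \<longrightarrow> adim sc a \<le> enat (2 * k + 2) \<and>
             (adim sc a = enat (2 * k + 2) \<longrightarrow> odd_relation sc a)"
    proof
      assume ak: "\<alpha> k \<noteq> 0"
      define \<beta> where "\<beta> i = (if i = k + 1 then \<alpha> k else \<alpha> i + \<alpha> (i - 1))" for i
      have ins: "{1..k+1} = insert (k+1) {1..k}" by auto
      have "(\<Sum>i\<in>{1..k+1}. sc (\<beta> i) (a (int i) - a (- int i)))
          = sc (\<alpha> k) (a (int k + 1) - a (- int k - 1)) + (\<Sum>i\<in>{1..k}. sc (\<beta> i) (a (int i) - a (- int i)))"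
      proof -
        have ee: "- int k - 1 = - 1 - int k" by simp
        show ?thesis unfolding ins ee by (simp add: \<beta>_def algebra_simps)
      qed
      also have "(\<Sum>i\<in>{1..k}. sc (\<beta> i) (a (int i) - a (- int i))) =
          (\<Sum>i\<in>{1..k}. sc (\<alpha> i + \<alpha> (i - 1)) (a (int i) - a (- int i)))"
        by (rule sum.cong) (simp_all add: \<beta>_def)
      finally have rel2: "(\<Sum>i\<in>{1..k+1}. sc (\<beta> i) (a (int i) - a (- int i))) = 0"
        using C2 by simp
      have bn: "\<beta> (k + 1) \<noteq> 0" using ak by (simp add: \<beta>_def)
      have e: "2 * (k + 1) = 2 * k + 2" by simp
      have b: "adim sc a \<le> enat (2 * (k + 1))" by (rule vs.adim_bound[OF sh _ bn rel2]) simp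
      have o: "adim sc a = enat (2 * (k + 1)) \<Longrightarrow> odd_relation sc a"
        by (rule odd_rel_of[of "k + 1" \<beta> sc a]) (use bn rel2 in simp_all)
      show "adim sc a \<le> enat (2 * k + 2) \<and> (adim sc a = enat (2 * k + 2) \<longrightarrow> odd_relation sc a)"
        using b o unfolding e by blast
    qed
    show "?C2 = 0 \<and> (\<alpha> k \<noteq> 0 \<longrightarrow> adim sc a \<le> enat (2 * k + 2) \<and>
             (adim sc a = enat (2 * k + 2) \<longrightarrow> odd_relation sc a))"
      using C2 adim2 by blast
  qed
  show ?thesis using part1 adim1 part2 by blast
qed
end
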